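(* Let $n\ge1$, $\alpha\in(0,1)$, $\mu\in(0,1]$, $T>0$, $\tau>0$, let $A,B$ be constant real $n\times n$ matrices, let $\phi:[-\tau,0]\to\mathbb{R}^n$ be continuous, and let $f:[0,T]\times\mathbb{R}^n\times\mathbb{R}^n\to\mathbb{R}^n$ be continuous with $f(t,0,0)=0$. Consider $$ \begin{cases} {}^C\!D_{0}^{\alpha,\mu}y(t)=\exp\!\left(\frac{\mu-1}{\mu}t\right)\left[Ay(t)+By(t-\tau)+f(t,y(t),y(t-\tau))\right], & t\in[0,T],\\ y(t)=\phi(t), & t\in[-\tau,0]. \end{cases} $$ Assume there is $L_f>0$ such that for all functions $y,z:[-\tau,T]\to\mathbb{R}^n$ and all $t\in[0,T]$, $\|f(t,y(t),y(t-\tau))-f(t,z(t),z(t-\tau))\|\le L_f\big(\|y(t)-z(t)\|+\|y(t-\tau)-z(t-\tau)\|\big)$. Set $k=1+\alpha$, $r=1+\frac{1}{\alpha}$, $\omega=\left(\frac{\Gamma(\alpha^2)}{k^{\alpha^2}}\right)^{1/k}$, $$ \psi=\frac{3^{1/\alpha}\big((\|A\|+L_f)^r+(\|B\|+L_f)^r e^{-r\tau}\big)\omega^r}{\mu^{k}\Gamma^r(\alpha)},\qquad \varphi=\frac{3^{1/\alpha}(\|B\|+L_f)^r\big(1-e^{-r\tau}\big)}{r\,\mu^{k}\Gamma^r(\alpha)}\,\omega^r . $$ Let $c_1,c_2$ be positive numbers with $c_1\le c_2$. If $$ \left(\frac{3^{1/\alpha}r+\big(3^{1/\alpha}\psi+r\varphi+\psi\varphi\big)e^{(\psi+r)t}}{r+\psi}\right)^{1/r}\le\frac{c_2}{c_1}\quad\text{for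 all } t\in[0,T], $$ then the system is finite time stable with respect to $\{c_1,c_2,T\}$, i.e. $\|\phi\|_C\le c_1$ implies $\|y(t)\|<c_2$ for all $t\in[0,T]$, where $y$ is the (unique mild) solution.
   Context: $\|\cdot\|$ denotes the Euclidean norm of a vector and the spectral norm of a matrix; $\|\phi\|_C=\sup_{t\in[-\tau,0]}\|\phi(t)\|$. $\Gamma$ is Euler's Gamma function. For $\alpha>0$, $\mu\in(0,1]$, the generalized proportional fractional integral is ${}^C\!I_{0}^{\alpha,\mu}h(t)=\frac{1}{\mu^{\alpha}\Gamma(\alpha)}\int_0^t \exp\!\left(\frac{\mu-1}{\mu}(t-s)\right)(t-s)^{\alpha-1}h(s)\,ds$, and for $\alpha\in(0,1)$ the Caputo generalized proportional fractional derivative is ${}^C\!D_{0}^{\alpha,\mu}h(t)=\frac{1}{\mu^{1-\alpha}\Gamma(1-\alpha)}\int_0^t \exp\!\left(\frac{\mu-1}{\mu}(t-s)\right)(t-s)^{-\alpha}\big((1-\mu)h(s)+\mu h'(s)\big)\,ds$ (applied componentwise to vector functions). A (mild) solution is a function $y:[-\tau,T]\to\mathbb{R}^n$ with $y=\phi$ on $[-\tau,0]$ and, for $t\in[0,T]$, $y(t)=\phi(0)\exp\!\left(\frac{\mu-1}{\mu}t\right)+{}^C\!I_{0}^{\alpha,\mu}\Big[\exp\!\left(\frac{\mu-1}{\mu}s\right)\big(Ay(s)+By(s-\tau)+f(s,y(s),y(s-\tau))\big)\Big](t)$; under the Lipschitz condition such a solution exists and is unique. *)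

theory Defs
  imports "HOL-Analysis.Analysis"
begin

definition gpf_integral :: "real \<Rightarrow> real \<Rightarrow> (real \<Rightarrow> real^'n) \<Rightarrow> real \<Rightarrow> real^'n" where
  "gpf_integral \<alpha> \<mu> h t =
     (1 / (\<mu> powr \<alpha> * Gamma \<alpha>)) *\<^sub>R
       integral {0..t} (\<lambda>s. (exp ((\<mu> - 1) / \<mu> * (t - s)) * (t - s) powr (\<alpha> - 1)) *\<^sub>R h s)"

definition spec_norm :: "real^'n^'n \<Rightarrow> real" where
  "spec_norm M = onorm (\<lambda>x. M *v x)"

definition normC :: "real \<Rightarrow> (real \<Rightarrow> real^'n) \<Rightarrow> real" where
  "normC \<tau> \<phi> = (SUP t\<in>{-\<tau>..0}. norm (\<phi> t))"

definition mild_solution ::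
  "real \<Rightarrow> real \<Rightarrow> real \<Rightarrow> real \<Rightarrow> real^'n^'n \<Rightarrow> real^'n^'n \<Rightarrow>
   (real \<Rightarrow> real^'n \<Rightarrow> real^'n \<Rightarrow> real^'n) \<Rightarrow> (real \<Rightarrow> real^'n) \<Rightarrow> (real \<Rightarrow> real^'n) \<Rightarrow> bool" where
  "mild_solution \<alpha> \<mu> T \<tau> A B f \<phi> y \<longleftrightarrow>
     continuous_on {-\<tau>..T} y \<and>
     (\<forall>t\<in>{-\<tau>..0}. y t = \<phi> t) \<and>
     (\<forall>t\<in>{0..T}. y t = exp ((\<mu> - 1) / \<mu> * t) *\<^sub>R \<phi> 0 +
        gpf_integral \<alpha> \<mu>
          (\<lambda>s. exp ((\<mu> - 1) / \<mu> * s) *\<^sub>R (A *v y s + B *v y (s - \<tau>) + f s (y s) (y (s - \<tau>)))) t)"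

end

theory Submission
  imports Defs
begin

lemma kernel_has_integral:
  fixes t \<beta> :: real
  assumes "\<beta> > -1" "t \<ge> 0"
  shows "((\<lambda>s. (t - s) powr \<beta>) has_integral t powr (\<beta>+1)/(\<beta>+1)) {0..t}"
proof -
  have "((\<lambda>x. x powr \<beta>) has_integral t powr (\<beta>+1)/(\<beta>+1)) (cbox 0 t)"
    using has_integral_powr_from_0[OF assms] by simp
  from has_integral_affinity[OF this, of "-1" t]
  have "((\<lambda>x. (- x + t) powr \<beta>) has_integral t powr (\<beta>+1)/(\<beta>+1)) ((\<lambda>x. - x + t) ` {0..t})"
    by simp
  moreover have "(\<lambda>x. - x + t) ` {0..t} = {0..t}"
    using image_affinity_atLeastAtMost[of "-1" t 0 t] assms by simp
  ultimately show ?thesis by simp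
qed

lemma kernel_integrable:
  fixes t \<beta> :: real and h :: "real \<Rightarrow> real"
  assumes "\<beta> > -1" "t \<ge> 0" "continuous_on {0..t} h"
  shows "(\<lambda>s. (t - s) powr \<beta> * h s) absolutely_integrable_on {0..t}"
proof -
  have "(\<lambda>s. h s * (t - s) powr \<beta>) absolutely_integrable_on {0..t}"
  proof (rule absolutely_integrable_bounded_measurable_product_real)
    show "h \<in> borel_measurable (lebesgue_on {0..t})"
      by (rule continuous_imp_measurable_on_sets_lebesgue[OF assms(3)]) auto
    show "bounded (h ` {0..t})"
      by (rule compact_imp_bounded, rule compact_continuous_image[OF assms(3)]) auto
    show "(\<lambda>s. (t - s) powr \<beta>) absolutely_integrable_on {0..t}"
      by (rule nonnegative_absolutely_integrable_1)
        (use kernel_has_integral[OF assms(1,2)] in auto)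
  qed auto
  then show ?thesis by (simp add: mult.commute)
qed

lemma kernel_integrable':
  fixes t \<beta> :: real and h :: "real \<Rightarrow> real"
  assumes "\<beta> > -1" "t \<ge> 0" "continuous_on {0..t} h"
  shows "(\<lambda>s. (t - s) powr \<beta> * h s) integrable_on {0..t}"
  using kernel_integrable[OF assms] by (simp add: absolutely_integrable_on_def)

lemma gamma_bound:
  fixes t \<beta> k :: real
  assumes "\<beta> > 0" "k > 0" "t \<ge> 0"
  shows "integral {0..t} (\<lambda>s. (t - s) powr (\<beta> - 1) * exp (k * s)) \<le> exp (k * t) * Gamma \<beta> / k powr \<beta>"
proof -
  define g where "g = (\<lambda>u::real. u powr (\<beta> - 1) / exp u)"
  have G: "(g has_integral Gamma \<beta>) {0..}" unfolding g_def by (rule Gamma_integral_real[OF assms(1)])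
  have gi: "g integrable_on {0..k*t}"
    by (rule integrable_on_subinterval[of _ "{0..}"]) (use G in auto)
  define I where "I = integral {0..k*t} g"
  have "I \<le> Gamma \<beta>"
    unfolding I_def using integral_subset_le[of "{0..k*t}" "{0..}" g] G gi
    by (auto simp: g_def has_integral_integrable_integral)
  have "(g has_integral I) (cbox 0 (k*t))" using gi I_def by (simp add: has_integral_integral)
  from has_integral_affinity[OF this, of "-k" "k*t"] assms
  have "((\<lambda>x. g (- k * x + k * t)) has_integral I / k) ((\<lambda>x. - (1/k) * x + t) ` {0..k*t})"
    by (simp add: field_simps)
  moreover have "(\<lambda>x. - (1/k) * x + t) ` {0..k*t} = {0..t}"
    using image_affinity_atLeastAtMost[of "-(1/k)" t 0 "k*t"] assms by auto
  ultimately have H: "((\<lambda>x. g (- k * x + k * t)) has_integral I / k) {0..t}" by simp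
  have "((\<lambda>x. (exp (k*t) / k powr (\<beta> - 1)) * g (- k * x + k * t)) has_integral (exp (k*t) / k powr (\<beta> - 1)) * (I / k)) {0..t}"
    by (rule has_integral_mult_right[OF H])
  moreover have "(exp (k*t) / k powr (\<beta> - 1)) * g (- k * x + k * t) = (t - x) powr (\<beta> - 1) * exp (k * x)"
    if "x \<in> {0..t}" for x
  proof -
    have "- k * x + k * t = k * (t - x)" by (simp add: algebra_simps)
    moreover have "(k * (t - x)) powr (\<beta> - 1) = k powr (\<beta> - 1) * (t - x) powr (\<beta> - 1)"
      using that assms by (simp add: powr_mult)
    moreover have "exp (k*t) / exp (k * (t - x)) = exp (k * x)"
      by (simp add: algebra_simps flip: exp_diff)
    ultimately show ?thesis using assms unfolding g_def
      by (simp add: field_simps)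
  qed
  ultimately have "((\<lambda>s. (t - s) powr (\<beta> - 1) * exp (k * s)) has_integral (exp (k*t) / k powr (\<beta> - 1)) * (I / k)) {0..t}"
    by (rule has_integral_eq[rotated]) auto
  then have "integral {0..t} (\<lambda>s. (t - s) powr (\<beta> - 1) * exp (k * s)) = exp (k*t) * I / k powr \<beta>"
    using assms by (simp add: integral_unique powr_diff field_simps)
  also have "\<dots> \<le> exp (k * t) * Gamma \<beta> / k powr \<beta>"
    using \<open>I \<le> Gamma \<beta>\<close> assms by (simp add: divide_right_mono)
  finally show ?thesis .
qed

lemma integral_lin2:
  fixes F G :: "real \<Rightarrow> real"
  assumes "F integrable_on S" "G integrable_on S"
  shows "integral S (\<lambda>x. a * F x + b * G x) = a * integral S F + b * integral S G"
  using integral_add[OF integrable_on_mult_right[OF assms(1), of a] integrable_on_mult_right[OF assms(2), of b]]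
  by simp

lemma holder_young_lambda:
  fixes f g :: "real \<Rightarrow> real" and S :: "real set" and p q l :: real
  assumes pq: "p > 1" "q > 1" "1/p + 1/q = 1" and l: "l > 0"
    and nn: "\<And>x. x \<in> S \<Longrightarrow> f x \<ge> 0" "\<And>x. x \<in> S \<Longrightarrow> g x \<ge> 0"
    and fp: "(\<lambda>x. f x powr p) integrable_on S"
    and gq: "(\<lambda>x. g x powr q) integrable_on S"
    and fg: "(\<lambda>x. f x * g x) integrable_on S"
  shows "integral S (\<lambda>x. f x * g x) \<le> l powr p / p * integral S (\<lambda>x. f x powr p) + l powr (-q) / q * integral S (\<lambda>x. g x powr q)"
proof -
  have "integral S (\<lambda>x. f x * g x) \<le> integral S (\<lambda>x. l powr p / p * f x powr p + l powr (-q) / q * g x powr q)"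
  proof (rule integral_le[OF fg])
    show "(\<lambda>x. l powr p / p * f x powr p + l powr (-q) / q * g x powr q) integrable_on S"
      by (intro integrable_add integrable_on_mult_right fp gq)
    fix x assume x: "x \<in> S"
    have "f x * g x = (l * f x) * (g x / l)" using l by simp
    also have "\<dots> \<le> (l * f x) powr p / p + (g x / l) powr q / q"
      by (rule Youngs_inequality) (use pq l nn x in auto)
    also have "\<dots> = l powr p / p * f x powr p + l powr (-q) / q * g x powr q"
      using l nn x by (simp add: powr_mult powr_divide powr_minus_divide)
    finally show "f x * g x \<le> l powr p / p * f x powr p + l powr (-q) / q * g x powr q" .
  qed
  also have "\<dots> = l powr p / p * integral S (\<lambda>x. f x powr p) + l powr (-q) / q * integral S (\<lambda>x. g x powr q)"
    by (rule integral_lin2[OF fp gq])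
  finally show ?thesis .
qed

lemma holder:
  fixes f g :: "real \<Rightarrow> real" and S :: "real set" and p q :: real
  assumes pq: "p > 1" "q > 1" "1/p + 1/q = 1"
    and nn: "\<And>x. x \<in> S \<Longrightarrow> f x \<ge> 0" "\<And>x. x \<in> S \<Longrightarrow> g x \<ge> 0"
    and fp: "(\<lambda>x. f x powr p) integrable_on S"
    and gq: "(\<lambda>x. g x powr q) integrable_on S"
    and fg: "(\<lambda>x. f x * g x) integrable_on S"
  shows "integral S (\<lambda>x. f x * g x) \<le> integral S (\<lambda>x. f x powr p) powr (1/p) * integral S (\<lambda>x. g x powr q) powr (1/q)"
proof -
  define F where "F = integral S (\<lambda>x. f x powr p)"
  define G where "G = integral S (\<lambda>x. g x powr q)"
  have F0: "F \<ge> 0" unfolding F_def by (rule integral_nonneg[OF fp]) auto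
  have G0: "G \<ge> 0" unfolding G_def by (rule integral_nonneg[OF gq]) auto
  note Y = holder_young_lambda[OF pq _ nn fp gq fg, folded F_def G_def]
  show ?thesis
  proof (cases "F = 0 \<or> G = 0")
    case True
    have "integral S (\<lambda>x. f x * g x) \<le> 0"
    proof (rule field_le_epsilon)
      fix e :: real assume e: "e > 0"
      show "integral S (\<lambda>x. f x * g x) \<le> 0 + e"
      proof (cases "F = 0")
        case True
        define l where "l = ((G + 1) / (q * e)) powr (1/q)"
        have l: "l > 0" using G0 e pq unfolding l_def by simp
        have "l powr (-q) = q * e / (G + 1)"
          unfolding l_def using G0 e pq by (simp add: powr_powr powr_minus_divide powr_divide)
        have "l powr (-q) / q * G \<le> l powr (-q) / q * (G + 1)"
          using pq by (intro mult_left_mono) auto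
        also have "\<dots> = e" using \<open>l powr (-q) = q * e / (G + 1)\<close> G0 pq by (simp add: field_simps)
        finally have "l powr (-q) / q * G \<le> e" .
        then show ?thesis using Y[OF l] True by simp
      next
        case False
        then have G: "G = 0" using \<open>F = 0 \<or> G = 0\<close> by simp
        define l where "l = (p * e / (F + 1)) powr (1/p)"
        have l: "l > 0" using F0 e pq unfolding l_def by simp
        have "l powr p = p * e / (F + 1)"
          unfolding l_def using F0 e pq by (simp add: powr_powr)
        have "l powr p / p * F \<le> l powr p / p * (F + 1)"
          using pq by (intro mult_left_mono) auto
        also have "\<dots> = e" using \<open>l powr p = p * e / (F + 1)\<close> F0 pq by (simp add: field_simps)
        finally have "l powr p / p * F \<le> e" .
        then show ?thesis using Y[OF l] G by simp
      qed
    qed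
    moreover have "0 \<le> F powr (1/p) * G powr (1/q)" by simp
    ultimately have "integral S (\<lambda>x. f x * g x) \<le> F powr (1/p) * G powr (1/q)"
      by (rule order_trans)
    then show ?thesis by (simp only: F_def G_def)
  next
    case False
    then have Fp: "F > 0" and Gp: "G > 0" using F0 G0 by auto
    define A where "A = F powr (1/p)"
    define B where "B = G powr (1/q)"
    have A: "A > 0" "A powr p = F" unfolding A_def using Fp pq by (auto simp: powr_powr)
    have B: "B > 0" "B powr q = G" unfolding B_def using Gp pq by (auto simp: powr_powr)
    have AB: "A * B > 0" using A B by simp
    have "(\<lambda>x. (f x / A) * (g x / B)) = (\<lambda>x. (1 / (A * B)) * (f x * g x))"
      by (auto simp: fun_eq_iff)
    then have "integral S (\<lambda>x. f x * g x) / (A * B) = integral S (\<lambda>x. (f x / A) * (g x / B))"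
      by simp
    also have "\<dots> \<le> integral S (\<lambda>x. (1 / (p * F)) * f x powr p + (1 / (q * G)) * g x powr q)"
    proof (rule integral_le)
      show "(\<lambda>x. f x / A * (g x / B)) integrable_on S"
        using integrable_on_mult_right[OF fg, of "1/(A*B)"] by (simp add: field_simps)
      show "(\<lambda>x. (1 / (p * F)) * f x powr p + (1 / (q * G)) * g x powr q) integrable_on S"
        by (intro integrable_add integrable_on_mult_right fp gq)
      fix x assume x: "x \<in> S"
      have "f x / A * (g x / B) \<le> (f x / A) powr p / p + (g x / B) powr q / q"
        by (rule Youngs_inequality) (use pq A B nn x in auto)
      also have "\<dots> = (1 / (p * F)) * f x powr p + (1 / (q * G)) * g x powr q"
        using A B nn x by (simp only: powr_divide) (simp add: field_simps)
      finally show "f x / A * (g x / B) \<le> (1 / (p * F)) * f x powr p + (1 / (q * G)) * g x powr q" .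
    qed
    also have "\<dots> = 1"
      using integral_lin2[OF fp gq, of "1 / (p * F)" "1 / (q * G)"] Fp Gp pq
      by (simp add: F_def[symmetric] G_def[symmetric])
    finally have "integral S (\<lambda>x. f x * g x) \<le> A * B"
      using AB by (simp add: pos_divide_le_eq)
    then show ?thesis unfolding A_def B_def F_def G_def .
  qed
qed

lemma kernel_holder:
  fixes \<alpha> t :: real and h :: "real \<Rightarrow> real"
  assumes a: "0 < \<alpha>" "\<alpha> < 1" and t: "t \<ge> 0"
    and hc: "continuous_on {0..t} h" and hn: "\<And>s. s \<in> {0..t} \<Longrightarrow> h s \<ge> 0"
  shows "integral {0..t} (\<lambda>s. (t - s) powr (\<alpha> - 1) * h s)
     \<le> exp t * (Gamma (\<alpha>\<^sup>2) / (1 + \<alpha>) powr (\<alpha>\<^sup>2)) powr (1 / (1 + \<alpha>))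
        * integral {0..t} (\<lambda>s. exp (- (1 + 1/\<alpha>) * s) * h s powr (1 + 1/\<alpha>)) powr (1 / (1 + 1/\<alpha>))"
proof -
  define k where "k = 1 + \<alpha>"
  define r where "r = 1 + 1/\<alpha>"
  have k: "k > 1" and r: "r > 1" and kr: "1/k + 1/r = 1"
    using a unfolding k_def r_def by (auto simp: field_simps)
  define f where "f = (\<lambda>s. (t - s) powr (\<alpha> - 1) * exp s)"
  define g where "g = (\<lambda>s. exp (- s) * h s)"
  have fn: "f s \<ge> 0" for s unfolding f_def by simp
  have gn: "g s \<ge> 0" if "s \<in> {0..t}" for s unfolding g_def using hn[OF that] by simp
  have e1: "f s * g s = (t - s) powr (\<alpha> - 1) * h s" for s
    unfolding f_def g_def by (simp add: field_simps flip: exp_add)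
  have e2: "f s powr k = (t - s) powr (\<alpha>\<^sup>2 - 1) * exp (k * s)" if "s \<in> {0..t}" for s
  proof -
    have "f s powr k = ((t - s) powr (\<alpha> - 1)) powr k * exp s powr k"
      unfolding f_def using that by (simp add: powr_mult)
    also have "\<dots> = (t - s) powr ((\<alpha> - 1) * k) * exp (k * s)"
      by (simp add: powr_powr exp_powr_real mult.commute)
    also have "(\<alpha> - 1) * k = \<alpha>\<^sup>2 - 1" unfolding k_def by (simp add: algebra_simps power2_eq_square)
    finally show ?thesis .
  qed
  have e3: "g s powr r = exp (- r * s) * h s powr r" if "s \<in> {0..t}" for s
    unfolding g_def using hn[OF that] by (simp add: powr_mult exp_powr_real mult.commute)
  have I1: "(\<lambda>s. f s * g s) integrable_on {0..t}"
    unfolding e1 using kernel_integrable[OF _ t hc, of "\<alpha> - 1"] a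
    by (simp add: absolutely_integrable_on_def)
  have I2: "(\<lambda>s. f s powr k) integrable_on {0..t}"
  proof -
    have "(\<lambda>s. (t - s) powr (\<alpha>\<^sup>2 - 1) * exp (k * s)) integrable_on {0..t}"
    proof -
      have "continuous_on {0..t} (\<lambda>s. exp (k * s))" by (intro continuous_intros)
      moreover have "\<alpha>\<^sup>2 - 1 > -1" using a by simp
      ultimately show ?thesis using kernel_integrable[OF _ t, of "\<alpha>\<^sup>2 - 1" "\<lambda>s. exp (k * s)"]
        by (auto simp: absolutely_integrable_on_def)
    qed
    then show ?thesis by (rule integrable_spike_finite[of "{}", rotated 2]) (auto simp: e2)
  qed
  have hrc: "continuous_on {0..t} (\<lambda>s. exp (- r * s) * h s powr r)"
    using hn r by (intro continuous_intros continuous_on_powr' hc) auto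
  have I3: "(\<lambda>s. g s powr r) integrable_on {0..t}"
  proof -
    have "(\<lambda>s. exp (- r * s) * h s powr r) integrable_on {0..t}"
      by (rule integrable_continuous_interval[OF hrc])
    then show ?thesis by (rule integrable_spike_finite[of "{}", rotated 2]) (auto simp: e3)
  qed
  have H: "integral {0..t} (\<lambda>s. f s * g s) \<le> integral {0..t} (\<lambda>s. f s powr k) powr (1/k) * integral {0..t} (\<lambda>s. g s powr r) powr (1/r)"
    by (rule holder[OF k r kr _ _ I2 I3 I1]) (auto simp: fn gn)
  have "integral {0..t} (\<lambda>s. f s powr k) = integral {0..t} (\<lambda>s. (t - s) powr (\<alpha>\<^sup>2 - 1) * exp (k * s))"
    by (rule integral_cong) (simp add: e2)
  also have "\<dots> \<le> exp (k * t) * Gamma (\<alpha>\<^sup>2) / k powr (\<alpha>\<^sup>2)"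
    by (rule gamma_bound) (use a k t in auto)
  finally have Fk: "integral {0..t} (\<lambda>s. f s powr k) \<le> exp (k * t) * Gamma (\<alpha>\<^sup>2) / k powr (\<alpha>\<^sup>2)" .
  have Fk0: "integral {0..t} (\<lambda>s. f s powr k) \<ge> 0" by (rule integral_nonneg[OF I2]) simp
  have "integral {0..t} (\<lambda>s. f s powr k) powr (1/k) \<le> (exp (k * t) * (Gamma (\<alpha>\<^sup>2) / k powr (\<alpha>\<^sup>2))) powr (1/k)"
    using powr_mono2[OF _ Fk0 Fk, of "1/k"] k by (simp add: mult.assoc)
  also have "\<dots> = exp (k * t) powr (1/k) * (Gamma (\<alpha>\<^sup>2) / k powr (\<alpha>\<^sup>2)) powr (1/k)"
    by (rule powr_mult)
  also have "exp (k * t) powr (1/k) = exp t"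
    using k by (simp add: exp_powr_real)
  finally have Fk': "integral {0..t} (\<lambda>s. f s powr k) powr (1/k) \<le> exp t * (Gamma (\<alpha>\<^sup>2) / k powr (\<alpha>\<^sup>2)) powr (1/k)" .
  have G: "integral {0..t} (\<lambda>s. g s powr r) = integral {0..t} (\<lambda>s. exp (- r * s) * h s powr r)"
    by (rule integral_cong) (simp add: e3)
  have "integral {0..t} (\<lambda>s. (t - s) powr (\<alpha> - 1) * h s) = integral {0..t} (\<lambda>s. f s * g s)"
    by (simp add: e1)
  also have "\<dots> \<le> exp t * (Gamma (\<alpha>\<^sup>2) / k powr (\<alpha>\<^sup>2)) powr (1/k) * integral {0..t} (\<lambda>s. g s powr r) powr (1/r)"
    by (rule order_trans[OF H mult_right_mono[OF Fk']]) simp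
  finally have "integral {0..t} (\<lambda>s. (t - s) powr (\<alpha> - 1) * h s) \<le> exp t * (Gamma (\<alpha>\<^sup>2) / k powr (\<alpha>\<^sup>2)) powr (1/k) * integral {0..t} (\<lambda>s. g s powr r) powr (1/r)" .
  then show ?thesis unfolding G unfolding k_def r_def .
qed

lemma power_mean3:
  fixes x y z p :: real
  assumes "x > 0" "y > 0" "z > 0" "p \<ge> 1"
  shows "(x + y + z) powr p \<le> 3 powr (p - 1) * (x powr p + y powr p + z powr p)"
proof -
  have C: "convex_on {0<..} (\<lambda>x::real. x powr p)" by (rule powr_convex[OF assms(4)])
  have m: "((y + z) / 2) powr p \<le> (y powr p + z powr p) / 2"
    using convex_onD[OF C, of "1/2" y z] assms by (simp add: field_simps)
  have "(x + y + z) / 3 = (1 - 2/3) *\<^sub>R x + (2/3) *\<^sub>R ((y + z) / 2)"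
    by (simp add: field_simps)
  then have "((x + y + z) / 3) powr p = ((1 - 2/3) *\<^sub>R x + (2/3) *\<^sub>R ((y + z) / 2)) powr p"
    by (rule arg_cong)
  also have "\<dots> \<le> (1 - 2/3) * x powr p + (2/3) * ((y + z) / 2) powr p"
    by (rule convex_onD[OF C]) (use assms in auto)
  also have "\<dots> \<le> (1 - 2/3) * x powr p + (2/3) * ((y powr p + z powr p) / 2)"
    using m by simp
  also have "(1 - 2/3) * x powr p + (2/3) * ((y powr p + z powr p) / 2) = (x powr p + y powr p + z powr p) / 3"
    by (simp add: field_simps)
  finally have *: "((x + y + z) / 3) powr p \<le> (x powr p + y powr p + z powr p) / 3" .
  have "(x + y + z) powr p = 3 powr p * ((x + y + z) / 3) powr p"
    using assms by (simp add: powr_divide)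
  also have "\<dots> \<le> 3 powr p * ((x powr p + y powr p + z powr p) / 3)"
    using * by (intro mult_left_mono) auto
  also have "\<dots> = 3 powr (p - 1) * (x powr p + y powr p + z powr p)"
    by (simp add: powr_diff)
  finally show ?thesis .
qed

lemma expint:
  fixes C c3 P \<psi> r d a b :: real
  assumes "\<psi> \<noteq> 0" "a \<le> b"
  shows "((\<lambda>s. C * (c3 * r * exp (- r * (s - d)) + P * exp (\<psi> * (s - d)))) has_integral
     (C * (- c3 * exp (- r * (b - d)) + P / \<psi> * exp (\<psi> * (b - d))) -
      C * (- c3 * exp (- r * (a - d)) + P / \<psi> * exp (\<psi> * (a - d))))) {a..b}"
proof (rule fundamental_theorem_of_calculus[OF assms(2)])
  fix x assume "x \<in> {a..b}"
  have "((\<lambda>s. C * (- c3 * exp (- r * (s - d)) + P / \<psi> * exp (\<psi> * (s - d)))) has_real_derivative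
      C * (c3 * r * exp (- r * (x - d)) + P * exp (\<psi> * (x - d)))) (at x)"
    by (rule derivative_eq_intros refl | simp)+ (use assms in \<open>simp add: field_simps\<close>)
  then show "((\<lambda>s. C * (- c3 * exp (- r * (s - d)) + P / \<psi> * exp (\<psi> * (s - d)))) has_vector_derivative
      C * (c3 * r * exp (- r * (x - d)) + P * exp (\<psi> * (x - d)))) (at x within {a..b})"
    by (simp add: has_real_derivative_iff_has_vector_derivative[symmetric] has_field_derivative_at_within)
qed

lemma ident_alg:
  fixes c3 C \<psi> r ph u v :: real
  assumes "\<psi> > 0" "r > 0" "u > 0"
  shows "c3 * C + u * (\<psi> * (C / (r + \<psi>) * (c3 * (1 - 1 / u) + (c3 * \<psi> + r * ph + \<psi> * ph) * (v - 1) / \<psi>)) + ph * C)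
    = C * ((c3 * r + (c3 * \<psi> + r * ph + \<psi> * ph) * (v * u)) / (r + \<psi>))"
proof -
  define P where "P = c3 * \<psi> + r * ph + \<psi> * ph"
  define D where "D = r + \<psi>"
  define X where "X = c3 * (1 - 1 / u) + P * (v - 1) / \<psi>"
  have D: "D > 0" using assms unfolding D_def by simp
  have e1: "u * (\<psi> * X) = c3 * \<psi> * (u - 1) + P * (v - 1) * u"
    using assms unfolding X_def by (simp add: field_simps)
  have e2: "c3 * D + (c3 * \<psi> * (u - 1) + P * (v - 1) * u) + u * ph * D = c3 * r + P * (v * u)"
    unfolding P_def D_def by (simp add: algebra_simps)
  have "c3 * C + u * (\<psi> * (C / D * X)) + ph * C * u = C / D * (c3 * D + u * (\<psi> * X) + u * ph * D)"
    using D by (simp add: field_simps)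
  also have "\<dots> = C / D * (c3 * r + P * (v * u))" using e1 e2 by simp
  finally show ?thesis unfolding P_def[symmetric] D_def[symmetric] X_def[symmetric]
    by (simp add: algebra_simps add_divide_distrib)
qed

theorem theorem2:
  fixes \<alpha> \<mu> T \<tau> Lf c1 c2 :: real
    and A B :: "real^'n^'n"
    and \<phi> :: "real \<Rightarrow> real^'n"
    and f :: "real \<Rightarrow> real^'n \<Rightarrow> real^'n \<Rightarrow> real^'n"
    and y :: "real \<Rightarrow> real^'n"
  assumes alpha: "0 < \<alpha>" "\<alpha> < 1"
    and mu: "0 < \<mu>" "\<mu> \<le> 1"
    and T: "0 < T" and tau: "0 < \<tau>"
    and phi_cont: "continuous_on {-\<tau>..0} \<phi>"
    and f_cont: "continuous_on ({0..T} \<times> UNIV \<times> UNIV) (\<lambda>(t, u, v). f t u v)"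
    and f_zero: "\<forall>t\<in>{0..T}. f t 0 0 = 0"
    and Lf: "0 < Lf"
    and Lip: "\<forall>(u::real \<Rightarrow> real^'n) (v::real \<Rightarrow> real^'n). \<forall>t\<in>{0..T}.
               norm (f t (u t) (u (t - \<tau>)) - f t (v t) (v (t - \<tau>)))
                 \<le> Lf * (norm (u t - v t) + norm (u (t - \<tau>) - v (t - \<tau>)))"
    and c: "0 < c1" "c1 \<le> c2"
    and cond: "\<forall>t\<in>{0..T}.
       (let k = 1 + \<alpha>; r = 1 + 1 / \<alpha>;
            \<omega> = (Gamma (\<alpha>\<^sup>2) / k powr (\<alpha>\<^sup>2)) powr (1 / k);
            \<psi> = 3 powr (1 / \<alpha>) * ((spec_norm A + Lf) powr r + (spec_norm B + Lf) powr r * exp (- r * \<tau>))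
                  * \<omega> powr r / (\<mu> powr k * Gamma \<alpha> powr r);
            \<phi>' = 3 powr (1 / \<alpha>) * (spec_norm B + Lf) powr r * (1 - exp (- r * \<tau>))
                  / (r * \<mu> powr k * Gamma \<alpha> powr r) * \<omega> powr r
        in ((3 powr (1 / \<alpha>) * r + (3 powr (1 / \<alpha>) * \<psi> + r * \<phi>' + \<psi> * \<phi>') * exp ((\<psi> + r) * t))
              / (r + \<psi>)) powr (1 / r) \<le> c2 / c1)"
    and sol: "mild_solution \<alpha> \<mu> T \<tau> A B f \<phi> y"
    and init: "normC \<tau> \<phi> \<le> c1"
  shows "\<forall>t\<in>{0..T}. norm (y t) < c2"
proof -
  define k where "k = 1 + \<alpha>"
  define r where "r = 1 + 1 / \<alpha>"
  define \<omega> where "\<omega> = (Gamma (\<alpha>\<^sup>2) / k powr (\<alpha>\<^sup>2)) powr (1 / k)"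
  define \<psi> where "\<psi> = 3 powr (1 / \<alpha>) * ((spec_norm A + Lf) powr r + (spec_norm B + Lf) powr r * exp (- r * \<tau>))
                  * \<omega> powr r / (\<mu> powr k * Gamma \<alpha> powr r)"
  define ph where "ph = 3 powr (1 / \<alpha>) * (spec_norm B + Lf) powr r * (1 - exp (- r * \<tau>))
                  / (r * \<mu> powr k * Gamma \<alpha> powr r) * \<omega> powr r"
  define c3 where "c3 = 3 powr (1 / \<alpha>)"
  define P where "P = c3 * \<psi> + r * ph + \<psi> * ph"
  define Q where "Q = (\<lambda>t. (c3 * r + P * exp ((\<psi> + r) * t)) / (r + \<psi>))"
  define V where "V = (\<lambda>t. c1 * Q t powr (1 / r))"
  have condt: "V t \<le> c2" if "t \<in> {0..T}" for t
  proof -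
    have "Q t powr (1 / r) \<le> c2 / c1"
      using cond that unfolding Let_def Q_def P_def c3_def ph_def \<psi>_def \<omega>_def r_def k_def by simp
    then show ?thesis unfolding V_def using c by (simp add: field_simps)
  qed
  define a where "a = spec_norm A + Lf"
  define b where "b = spec_norm B + Lf"
  define K where "K = 1 / (\<mu> powr \<alpha> * Gamma \<alpha>)"
  define E where "E = (\<lambda>t. c1 powr r / (r + \<psi>) * (c3 * (1 - exp (- r * t)) + P * (exp (\<psi> * t) - 1) / \<psi>))"
  define Bd where "Bd = (\<lambda>t. c1 powr r * (1 - exp (- r * \<tau>)) / r + exp (- r * \<tau>) * E t)"
  have k1: "k > 1" and r1: "r > 1" and rk: "\<alpha> * r = k" using alpha unfolding k_def r_def by (auto simp: field_simps)
  have snA: "spec_norm A \<ge> 0" and snB: "spec_norm B \<ge> 0"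
    unfolding spec_norm_def by (auto intro: onorm_pos_le)
  have a0: "a > 0" and b0: "b > 0" using snA snB Lf unfolding a_def b_def by auto
  have G0: "Gamma \<alpha> > 0" using alpha by simp
  have G0': "Gamma \<alpha> \<noteq> 0" using G0 by simp
  have K0: "K > 0" unfolding K_def using G0 mu by simp
  have \<omega>0: "\<omega> > 0" unfolding \<omega>_def
  proof -
    have "Gamma (\<alpha>\<^sup>2) > 0" using alpha by (intro Gamma_real_pos) simp
    then show "(Gamma (\<alpha>\<^sup>2) / k powr (\<alpha>\<^sup>2)) powr (1 / k) > 0" using k1 by simp
  qed
  have c30: "c3 > 1" unfolding c3_def using alpha by simp
  have et: "exp (- r * \<tau>) < 1" using r1 tau by simp
  have \<psi>0: "\<psi> > 0" unfolding \<psi>_def using a0 b0 \<omega>0 mu G0 G0' alpha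
    by (intro divide_pos_pos mult_pos_pos add_pos_nonneg) (auto simp flip: a_def b_def)
  have ph0: "ph > 0" unfolding ph_def using b0 \<omega>0 mu G0 G0' alpha et r1
    by (intro divide_pos_pos mult_pos_pos) (auto simp flip: b_def)
  have P0: "P > 0" unfolding P_def using c30 \<psi>0 ph0 r1 by (intro add_pos_pos mult_pos_pos) auto
  have Q0: "Q t > 0" for t unfolding Q_def using c30 P0 \<psi>0 r1 by (intro divide_pos_pos add_pos_pos mult_pos_pos) auto
  have Qc: "continuous_on S Q" for S unfolding Q_def using \<psi>0 r1
    by (intro continuous_intros) auto
  have Vc: "continuous_on S V" for S unfolding V_def
    using Q0 by (intro continuous_intros continuous_on_powr Qc) (auto simp: less_imp_neq[symmetric])
  have Vr: "V t powr r = c1 powr r * Q t" for t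
    unfolding V_def using Q0[of t] c r1 by (simp add: powr_mult powr_powr)
  have V0: "V 0 > c1"
  proof -
    have "Q 0 = c3 + ph" unfolding Q_def P_def using \<psi>0 r1 by (simp add: field_simps)
    then have "Q 0 > 1" using c30 ph0 by simp
    then have "Q 0 powr (1 / r) > 1" using r1 by simp
    then show ?thesis unfolding V_def using c by simp
  qed
  have yc: "continuous_on {-\<tau>..T} y" and yphi: "\<And>t. t \<in> {-\<tau>..0} \<Longrightarrow> y t = \<phi> t"
    and yint: "\<And>t. t \<in> {0..T} \<Longrightarrow> y t = exp ((\<mu> - 1) / \<mu> * t) *\<^sub>R \<phi> 0 +
        gpf_integral \<alpha> \<mu>
          (\<lambda>s. exp ((\<mu> - 1) / \<mu> * s) *\<^sub>R (A *v y s + B *v y (s - \<tau>) + f s (y s) (y (s - \<tau>)))) t"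
    using sol unfolding mild_solution_def by auto
  have phib: "norm (\<phi> t) \<le> c1" if "t \<in> {-\<tau>..0}" for t
  proof -
    have "bounded ((\<lambda>t. norm (\<phi> t)) ` {-\<tau>..0})"
      by (intro compact_imp_bounded compact_continuous_image continuous_intros phi_cont) auto
    then have "bdd_above ((\<lambda>t. norm (\<phi> t)) ` {-\<tau>..0})" by (rule bounded_imp_bdd_above)
    then have "norm (\<phi> t) \<le> normC \<tau> \<phi>" unfolding normC_def by (rule cSUP_upper[OF that])
    then show ?thesis using init by simp
  qed
  have yneg: "norm (y t) \<le> c1" if "t \<in> {-\<tau>..0}" for t using yphi[OF that] phib[OF that] by simp
  have ync: "continuous_on {0..t} (\<lambda>s. norm (y s))" if "t \<le> T" for t
    by (intro continuous_intros continuous_on_subset[OF yc]) (use that tau in auto)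
  have ydc: "continuous_on {0..t} (\<lambda>s. norm (y (s - \<tau>)))" if "t \<le> T" for t
  proof -
    have "continuous_on {0..t} (\<lambda>s. s - \<tau>)" by (intro continuous_intros)
    moreover have "(\<lambda>s. s - \<tau>) ` {0..t} \<subseteq> {-\<tau>..T}" using that tau by auto
    ultimately have "continuous_on {0..t} (\<lambda>s. y (s - \<tau>))"
      by (rule continuous_on_compose2[OF yc])
    then show ?thesis by (intro continuous_intros)
  qed
  have Fb: "norm (A *v y s + B *v y (s - \<tau>) + f s (y s) (y (s - \<tau>))) \<le> a * norm (y s) + b * norm (y (s - \<tau>))"
    if "s \<in> {0..T}" for s
  proof -
    have "norm (f s (y s) (y (s - \<tau>)) - f s ((\<lambda>_. 0) s) ((\<lambda>_. 0) (s - \<tau>)))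
       \<le> Lf * (norm (y s - (\<lambda>_. 0) s) + norm (y (s - \<tau>) - (\<lambda>_. 0) (s - \<tau>)))"
      using spec[OF spec[OF Lip, of y], of "\<lambda>_. 0"] that by blast
    then have fb: "norm (f s (y s) (y (s - \<tau>))) \<le> Lf * (norm (y s) + norm (y (s - \<tau>)))"
      using f_zero that by simp
    have "norm (A *v y s) \<le> spec_norm A * norm (y s)" unfolding spec_norm_def by (rule onorm) simp
    moreover have "norm (B *v y (s - \<tau>)) \<le> spec_norm B * norm (y (s - \<tau>))" unfolding spec_norm_def by (rule onorm) simp
    ultimately show ?thesis using fb norm_triangle_ineq[of "A *v y s + B *v y (s - \<tau>)" "f s (y s) (y (s - \<tau>))"]
      norm_triangle_ineq[of "A *v y s" "B *v y (s - \<tau>)"] unfolding a_def b_def by (simp add: algebra_simps)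
  qed
  have F2: "norm (y t) \<le> c1 + K * integral {0..t} (\<lambda>s. (t - s) powr (\<alpha> - 1) * (a * norm (y s) + b * norm (y (s - \<tau>))))"
    if t: "t \<in> {0..T}" for t
  proof -
    define G where "G = (\<lambda>s. exp ((\<mu> - 1) / \<mu> * s) *\<^sub>R (A *v y s + B *v y (s - \<tau>) + f s (y s) (y (s - \<tau>))))"
    define g where "g = (\<lambda>s. (exp ((\<mu> - 1) / \<mu> * (t - s)) * (t - s) powr (\<alpha> - 1)) *\<^sub>R G s)"
    define h where "h = (\<lambda>s. (t - s) powr (\<alpha> - 1) * (a * norm (y s) + b * norm (y (s - \<tau>))))"
    have cneg: "(\<mu> - 1) / \<mu> \<le> 0" using mu by (simp add: divide_nonpos_pos)
    have ect: "exp ((\<mu> - 1) / \<mu> * t) \<le> 1"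
    proof -
      have "(\<mu> - 1) / \<mu> * t \<le> 0" using mult_nonpos_nonneg[OF cneg, of t] t by simp
      then show ?thesis by simp
    qed
    have hi: "h integrable_on {0..t}"
      unfolding h_def using t alpha
      by (intro kernel_integrable' continuous_intros ync ydc) auto
    have hI: "integral {0..t} h \<ge> 0"
      by (rule integral_nonneg[OF hi]) (auto simp: h_def a0 b0 less_imp_le intro!: mult_nonneg_nonneg add_nonneg_nonneg)
    have nI: "norm (integral {0..t} g) \<le> integral {0..t} h"
    proof (cases "g integrable_on {0..t}")
      case True
      show ?thesis
      proof (rule integral_norm_bound_integral[OF True hi])
        fix s assume s: "s \<in> {0..t}"
        have "norm (g s) = exp ((\<mu> - 1) / \<mu> * (t - s)) * exp ((\<mu> - 1) / \<mu> * s) * (t - s) powr (\<alpha> - 1)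
              * norm (A *v y s + B *v y (s - \<tau>) + f s (y s) (y (s - \<tau>)))"
          unfolding g_def G_def by simp
        also have "exp ((\<mu> - 1) / \<mu> * (t - s)) * exp ((\<mu> - 1) / \<mu> * s) = exp ((\<mu> - 1) / \<mu> * t)"
          unfolding exp_add[symmetric] by (simp add: ring_distribs)
        also have "exp ((\<mu> - 1) / \<mu> * t) * (t - s) powr (\<alpha> - 1) * norm (A *v y s + B *v y (s - \<tau>) + f s (y s) (y (s - \<tau>)))
            \<le> 1 * (t - s) powr (\<alpha> - 1) * (a * norm (y s) + b * norm (y (s - \<tau>)))"
        proof (intro mult_mono)
          show "exp ((\<mu> - 1) / \<mu> * t) \<le> 1" by (rule ect)
          show "norm (A *v y s + B *v y (s - \<tau>) + f s (y s) (y (s - \<tau>))) \<le> a * norm (y s) + b * norm (y (s - \<tau>))"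
            using Fb[of s] s t by simp
        qed (use a0 b0 in auto)
        finally show "norm (g s) \<le> h s" unfolding h_def by simp
      qed
    next
      case False
      then show ?thesis using hI by (simp add: not_integrable_integral)
    qed
    have "norm (y t) \<le> norm (exp ((\<mu> - 1) / \<mu> * t) *\<^sub>R \<phi> 0) + norm (gpf_integral \<alpha> \<mu> G t)"
      unfolding yint[OF t] G_def by (rule norm_triangle_ineq)
    also have "norm (exp ((\<mu> - 1) / \<mu> * t) *\<^sub>R \<phi> 0) \<le> c1"
    proof -
      note ect
      moreover have "norm (\<phi> 0) \<le> c1" using phib[of 0] tau by simp
      ultimately show ?thesis by (simp add: mult_le_one order_trans[OF mult_right_mono[of _ 1]])
    qed
    also have "norm (gpf_integral \<alpha> \<mu> G t) = K * norm (integral {0..t} g)"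
      unfolding gpf_integral_def K_def g_def using mu G0 by simp
    also have "\<dots> \<le> K * integral {0..t} h" using nI K0 by simp
    finally show ?thesis unfolding h_def by simp
  qed
  have rpsi: "r + \<psi> \<noteq> 0" "\<psi> + r \<noteq> 0" using r1 \<psi>0 by auto
  have expmul: "exp (- r * s) * exp ((\<psi> + r) * s) = exp (\<psi> * s)" for s
    by (simp add: mult_exp_exp algebra_simps)
  have F3: "((\<lambda>s. exp (- r * s) * V s powr r) has_integral E t) {0..t}" if t: "t \<ge> 0" for t
  proof -
    have "((\<lambda>s. c1 powr r / (r + \<psi>) * (c3 * r * exp (- r * (s - 0)) + P * exp (\<psi> * (s - 0)))) has_integral
       (c1 powr r / (r + \<psi>) * (- c3 * exp (- r * (t - 0)) + P / \<psi> * exp (\<psi> * (t - 0))) -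
        c1 powr r / (r + \<psi>) * (- c3 * exp (- r * (0 - 0)) + P / \<psi> * exp (\<psi> * (0 - 0))))) {0..t}"
      by (rule expint) (use \<psi>0 t in auto)
    moreover have "c1 powr r / (r + \<psi>) * (- c3 * exp (- r * (t - 0)) + P / \<psi> * exp (\<psi> * (t - 0))) -
        c1 powr r / (r + \<psi>) * (- c3 * exp (- r * (0 - 0)) + P / \<psi> * exp (\<psi> * (0 - 0))) = E t"
      unfolding E_def using \<psi>0 rpsi by (simp add: field_simps) (simp add: add_divide_distrib[symmetric] algebra_simps)
    moreover have "c1 powr r / (r + \<psi>) * (c3 * r * exp (- r * (s - 0)) + P * exp (\<psi> * (s - 0))) = exp (- r * s) * V s powr r" for s
    proof -
      have "exp (- r * s) * V s powr r = c1 powr r / (r + \<psi>) * (c3 * r * exp (- r * s) + P * (exp (- r * s) * exp ((\<psi> + r) * s)))"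
        unfolding Vr Q_def by (simp add: field_simps)
      then show ?thesis unfolding expmul by simp
    qed
    ultimately show ?thesis by simp
  qed
  have F4: "((\<lambda>s. exp (- r * s) * V (s - \<tau>) powr r) has_integral exp (- r * \<tau>) * E (t - \<tau>)) {\<tau>..t}" if t: "t \<ge> \<tau>" for t
  proof -
    have "((\<lambda>s. (exp (- r * \<tau>) * c1 powr r / (r + \<psi>)) * (c3 * r * exp (- r * (s - \<tau>)) + P * exp (\<psi> * (s - \<tau>)))) has_integral
       ((exp (- r * \<tau>) * c1 powr r / (r + \<psi>)) * (- c3 * exp (- r * (t - \<tau>)) + P / \<psi> * exp (\<psi> * (t - \<tau>))) -
        (exp (- r * \<tau>) * c1 powr r / (r + \<psi>)) * (- c3 * exp (- r * (\<tau> - \<tau>)) + P / \<psi> * exp (\<psi> * (\<tau> - \<tau>))))) {\<tau>..t}"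
      by (rule expint) (use \<psi>0 t in auto)
    moreover have "(exp (- r * \<tau>) * c1 powr r / (r + \<psi>)) * (- c3 * exp (- r * (t - \<tau>)) + P / \<psi> * exp (\<psi> * (t - \<tau>))) -
        (exp (- r * \<tau>) * c1 powr r / (r + \<psi>)) * (- c3 * exp (- r * (\<tau> - \<tau>)) + P / \<psi> * exp (\<psi> * (\<tau> - \<tau>))) = exp (- r * \<tau>) * E (t - \<tau>)"
      unfolding E_def using \<psi>0 rpsi by (simp add: field_simps) (simp add: add_divide_distrib[symmetric] algebra_simps)
    moreover have "(exp (- r * \<tau>) * c1 powr r / (r + \<psi>)) * (c3 * r * exp (- r * (s - \<tau>)) + P * exp (\<psi> * (s - \<tau>))) = exp (- r * s) * V (s - \<tau>) powr r" for s
    proof -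
      have ee: "exp (- r * s) = exp (- r * \<tau>) * exp (- r * (s - \<tau>))" by (simp add: mult_exp_exp algebra_simps)
      have "exp (- r * s) * V (s - \<tau>) powr r = (exp (- r * \<tau>) * c1 powr r / (r + \<psi>)) * (c3 * r * exp (- r * (s - \<tau>)) + P * (exp (- r * (s - \<tau>)) * exp ((\<psi> + r) * (s - \<tau>))))"
        unfolding Vr Q_def ee by (simp add: field_simps)
      then show ?thesis unfolding expmul by simp
    qed
    ultimately show ?thesis by simp
  qed
  have C1: "((\<lambda>s. exp (- r * s) * c1 powr r) has_integral c1 powr r * (1 - exp (- r * m)) / r) {0..m}" if m: "m \<ge> 0" for m
  proof -
    have "((\<lambda>s. c1 powr r * ((1 / r) * r * exp (- r * (s - 0)) + 0 * exp (1 * (s - 0)))) has_integral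
       (c1 powr r * (- (1 / r) * exp (- r * (m - 0)) + 0 / 1 * exp (1 * (m - 0))) -
        c1 powr r * (- (1 / r) * exp (- r * (0 - 0)) + 0 / 1 * exp (1 * (0 - 0))))) {0..m}"
      by (rule expint) (use m in auto)
    then show ?thesis using r1 by (simp add: field_simps)
  qed
  have Emono: "E t1 < E t2" if "t1 < t2" for t1 t2
  proof -
    have "exp (- r * t2) < exp (- r * t1)" using that r1 by simp
    moreover have "exp (\<psi> * t1) < exp (\<psi> * t2)" using that \<psi>0 by simp
    ultimately have "c3 * (1 - exp (- r * t1)) + P * (exp (\<psi> * t1) - 1) / \<psi> < c3 * (1 - exp (- r * t2)) + P * (exp (\<psi> * t2) - 1) / \<psi>"
      using c30 P0 \<psi>0 by (intro add_less_le_mono mult_strict_left_mono divide_strict_right_mono add_strict_left_mono diff_strict_right_mono mult_left_mono divide_right_mono) auto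
    moreover have "c1 powr r / (r + \<psi>) > 0" using c \<psi>0 r1 by simp
    ultimately show ?thesis unfolding E_def by (rule mult_strict_left_mono)
  qed
  have E0: "E 0 = 0" unfolding E_def by simp
  define M where "M = \<omega> powr r / (\<mu> powr k * Gamma \<alpha> powr r)"
  have Kr: "K powr r = 1 / (\<mu> powr k * Gamma \<alpha> powr r)"
  proof -
    have "(\<mu> powr \<alpha> * Gamma \<alpha>) powr r = \<mu> powr k * Gamma \<alpha> powr r"
      using mu G0 by (simp add: powr_mult powr_powr rk)
    then show ?thesis unfolding K_def using mu G0 by (simp add: powr_divide)
  qed
  have \<psi>M: "\<psi> = c3 * (a powr r + b powr r * exp (- r * \<tau>)) * M"
    unfolding \<psi>_def M_def c3_def a_def b_def by simp
  have phM: "ph = c3 * b powr r * (1 - exp (- r * \<tau>)) / r * M"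
    unfolding ph_def M_def c3_def b_def using r1 by (simp add: field_simps)
  have powr3: "(K * \<omega> * exp t * x) powr r = M * exp (r * t) * x powr r" if "x \<ge> 0" for x t
  proof -
    have "(K * \<omega> * exp t * x) powr r = K powr r * \<omega> powr r * exp t powr r * x powr r"
      using K0 \<omega>0 that by (simp add: powr_mult)
    also have "exp t powr r = exp (r * t)" by (simp add: exp_powr_real mult.commute)
    finally show ?thesis unfolding Kr M_def by simp
  qed
  have keyid: "c3 * (c1 powr r + (K * \<omega> * exp t * a) powr r * E t + (K * \<omega> * exp t * b) powr r * Bd t) = V t powr r" for t
  proof -
    have "c3 * (c1 powr r + (K * \<omega> * exp t * a) powr r * E t + (K * \<omega> * exp t * b) powr r * Bd t)
        = c3 * c1 powr r + exp (r * t) * (\<psi> * E t + ph * c1 powr r)"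
      unfolding powr3[OF less_imp_le[OF a0]] powr3[OF less_imp_le[OF b0]] \<psi>M phM Bd_def
      using r1 by (simp add: field_simps)
    also have "\<dots> = c1 powr r * Q t"
    proof -
      have u: "exp (r * t) > 0" by simp
      have Eq: "E t = c1 powr r / (r + \<psi>) * (c3 * (1 - 1 / exp (r * t)) + P * (exp (\<psi> * t) - 1) / \<psi>)"
        unfolding E_def by (simp add: exp_minus field_simps)
      have Qq: "Q t = (c3 * r + P * (exp (\<psi> * t) * exp (r * t))) / (r + \<psi>)"
        unfolding Q_def by (simp add: mult_exp_exp algebra_simps)
      show ?thesis unfolding Eq Qq P_def
        by (rule ident_alg[of \<psi> r "exp (r * t)" c3 "c1 powr r" ph "exp (\<psi> * t)"])
          (use \<psi>0 r1 in auto)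
    qed
    finally show ?thesis unfolding Vr .
  qed
  have KH: "integral {0..t} (\<lambda>s. (t - s) powr (\<alpha> - 1) * h s)
     \<le> exp t * \<omega> * integral {0..t} (\<lambda>s. exp (- r * s) * h s powr r) powr (1 / r)"
    if "t \<ge> 0" "continuous_on {0..t} h" "\<And>s. s \<in> {0..t} \<Longrightarrow> h s \<ge> 0" for t h
    using kernel_holder[OF alpha that] unfolding k_def[symmetric] r_def[symmetric] \<omega>_def[symmetric] .
  have V0': "V s \<ge> 0" for s unfolding V_def using c by simp
  show ?thesis
  proof (rule ccontr)
    assume "\<not> (\<forall>t\<in>{0..T}. norm (y t) < c2)"
    then obtain t1 where t1: "t1 \<in> {0..T}" "norm (y t1) \<ge> c2" by auto
    define S where "S = {t \<in> {0..T}. V t \<le> norm (y t)}"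
    have t1S: "t1 \<in> S" unfolding S_def using t1 condt[OF t1(1)] by auto
    have Scl: "closed S" unfolding S_def
      by (rule continuous_on_closed_Collect_le[OF Vc ync]) auto
    define t0 where "t0 = Inf S"
    have t0S: "t0 \<in> S" unfolding t0_def
      by (rule closed_contains_Inf) (use t1S Scl in \<open>auto simp: S_def bdd_below_def\<close>)
    have below: "norm (y s) < V s" if "s \<in> {0..T}" "s < t0" for s
    proof (rule ccontr)
      assume "\<not> norm (y s) < V s"
      then have "s \<in> S" unfolding S_def using that by auto
      then have "t0 \<le> s" unfolding t0_def by (rule cInf_lower) (auto simp: S_def bdd_below_def)
      then show False using that by simp
    qed
    have t0T: "t0 \<in> {0..T}" and yt0: "V t0 \<le> norm (y t0)" using t0S unfolding S_def by auto
    have t0pos: "t0 > 0"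
    proof (rule ccontr)
      assume "\<not> t0 > 0"
      then have "t0 = 0" using t0T by simp
      then show False using yt0 yneg[of 0] V0 tau by simp
    qed
    have t0le: "t0 \<le> T" using t0T by simp
    note ynt = ync[OF t0le] and ydt = ydc[OF t0le]
    define Ia where "Ia = integral {0..t0} (\<lambda>s. (t0 - s) powr (\<alpha> - 1) * norm (y s))"
    define Ib where "Ib = integral {0..t0} (\<lambda>s. (t0 - s) powr (\<alpha> - 1) * norm (y (s - \<tau>)))"
    define J2 where "J2 = integral {0..t0} (\<lambda>s. exp (- r * s) * norm (y (s - \<tau>)) powr r)"
    have am1: "\<alpha> - 1 > -1" using alpha by simp
    have iA: "(\<lambda>s. (t0 - s) powr (\<alpha> - 1) * norm (y s)) integrable_on {0..t0}"
      by (rule kernel_integrable'[OF am1 _ ynt]) (use t0pos in simp)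
    have iB: "(\<lambda>s. (t0 - s) powr (\<alpha> - 1) * norm (y (s - \<tau>))) integrable_on {0..t0}"
      by (rule kernel_integrable'[OF am1 _ ydt]) (use t0pos in simp)
    have iV: "(\<lambda>s. (t0 - s) powr (\<alpha> - 1) * V s) integrable_on {0..t0}"
      by (rule kernel_integrable'[OF am1 _ Vc]) (use t0pos in simp)
    have split: "integral {0..t0} (\<lambda>s. (t0 - s) powr (\<alpha> - 1) * (a * norm (y s) + b * norm (y (s - \<tau>)))) = a * Ia + b * Ib"
    proof -
      have "integral {0..t0} (\<lambda>s. (t0 - s) powr (\<alpha> - 1) * (a * norm (y s) + b * norm (y (s - \<tau>))))
          = integral {0..t0} (\<lambda>s. a * ((t0 - s) powr (\<alpha> - 1) * norm (y s)) + b * ((t0 - s) powr (\<alpha> - 1) * norm (y (s - \<tau>))))"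
        by (rule integral_cong) (simp add: algebra_simps)
      also have "\<dots> = a * Ia + b * Ib" unfolding Ia_def Ib_def by (rule integral_lin2[OF iA iB])
      finally show ?thesis .
    qed
    have IaV: "Ia \<le> integral {0..t0} (\<lambda>s. (t0 - s) powr (\<alpha> - 1) * V s)"
      unfolding Ia_def
    proof (rule integral_le[OF iA iV])
      fix s assume s: "s \<in> {0..t0}"
      show "(t0 - s) powr (\<alpha> - 1) * norm (y s) \<le> (t0 - s) powr (\<alpha> - 1) * V s"
      proof (cases "s < t0")
        case True
        then have "norm (y s) < V s" using below[of s] s t0le by simp
        then show ?thesis by (intro mult_left_mono) auto
      next
        case False
        then have "s = t0" using s by simp
        then show ?thesis by simp
      qed
    qed
    have IaB: "integral {0..t0} (\<lambda>s. (t0 - s) powr (\<alpha> - 1) * V s) \<le> exp t0 * \<omega> * E t0 powr (1 / r)"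
      using KH[of t0 V] t0pos Vc V0' F3[of t0] by (simp add: integral_unique)
    have IbB: "Ib \<le> exp t0 * \<omega> * J2 powr (1 / r)"
      unfolding Ib_def J2_def by (rule KH) (use t0pos ydt in auto)
    have iJ: "(\<lambda>s. exp (- r * s) * norm (y (s - \<tau>)) powr r) integrable_on {0..t0}"
      by (rule integrable_continuous_interval)
        (use r1 in \<open>intro continuous_intros continuous_on_powr' ydt, auto\<close>)
    have J0: "J2 \<ge> 0" unfolding J2_def by (rule integral_nonneg[OF iJ]) simp
    have ptw: "exp (- r * s) * norm (y (s - \<tau>)) powr r \<le> exp (- r * s) * c1 powr r" if "s \<in> {0..\<tau>}" for s
    proof -
      have "norm (y (s - \<tau>)) \<le> c1" using yneg[of "s - \<tau>"] that by simp
      then have "norm (y (s - \<tau>)) powr r \<le> c1 powr r" using r1 by (intro powr_mono2) auto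
      then show ?thesis by simp
    qed
    have Et0: "E t0 > 0" using Emono[OF t0pos] E0 by simp
    have J2lt: "J2 < Bd t0"
    proof (cases "t0 \<le> \<tau>")
      case True
      have "J2 \<le> integral {0..t0} (\<lambda>s. exp (- r * s) * c1 powr r)"
        unfolding J2_def by (rule integral_le[OF iJ]) (use C1[of t0] t0pos True ptw in auto)
      also have "\<dots> = c1 powr r * (1 - exp (- r * t0)) / r" by (rule integral_unique, rule C1) (use t0pos in simp)
      also have "\<dots> \<le> c1 powr r * (1 - exp (- r * \<tau>)) / r"
        using True r1 c by (intro divide_right_mono mult_left_mono) auto
      also have "\<dots> < Bd t0" unfolding Bd_def using Et0 by simp
      finally show ?thesis .
    next
      case False
      then have tt: "\<tau> < t0" by simp
      have "J2 = integral {0..\<tau>} (\<lambda>s. exp (- r * s) * norm (y (s - \<tau>)) powr r)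
               + integral {\<tau>..t0} (\<lambda>s. exp (- r * s) * norm (y (s - \<tau>)) powr r)"
        unfolding J2_def using Henstock_Kurzweil_Integration.integral_combine[OF _ _ iJ, of \<tau>] tt tau by simp
      also have "integral {0..\<tau>} (\<lambda>s. exp (- r * s) * norm (y (s - \<tau>)) powr r) \<le> c1 powr r * (1 - exp (- r * \<tau>)) / r"
      proof -
        have "integral {0..\<tau>} (\<lambda>s. exp (- r * s) * norm (y (s - \<tau>)) powr r) \<le> integral {0..\<tau>} (\<lambda>s. exp (- r * s) * c1 powr r)"
          by (rule integral_le) (use integrable_on_subinterval[OF iJ, of 0 \<tau>] tt C1[of \<tau>] tau ptw in auto)
        also have "\<dots> = c1 powr r * (1 - exp (- r * \<tau>)) / r" by (rule integral_unique, rule C1) (use tau in simp)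
        finally show ?thesis .
      qed
      also have "integral {\<tau>..t0} (\<lambda>s. exp (- r * s) * norm (y (s - \<tau>)) powr r) \<le> exp (- r * \<tau>) * E (t0 - \<tau>)"
      proof -
        have "integral {\<tau>..t0} (\<lambda>s. exp (- r * s) * norm (y (s - \<tau>)) powr r) \<le> integral {\<tau>..t0} (\<lambda>s. exp (- r * s) * V (s - \<tau>) powr r)"
        proof (rule integral_le)
          show "(\<lambda>s. exp (- r * s) * norm (y (s - \<tau>)) powr r) integrable_on {\<tau>..t0}"
            using integrable_on_subinterval[OF iJ, of \<tau> t0] tau by auto
          show "(\<lambda>s. exp (- r * s) * V (s - \<tau>) powr r) integrable_on {\<tau>..t0}"
            using F4[of t0] tt by (auto simp: integrable_on_def)
          fix s assume s: "s \<in> {\<tau>..t0}"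
          have "norm (y (s - \<tau>)) < V (s - \<tau>)" using below[of "s - \<tau>"] s tau t0le by simp
          then have "norm (y (s - \<tau>)) powr r \<le> V (s - \<tau>) powr r" using r1 by (intro powr_mono2) auto
          then show "exp (- r * s) * norm (y (s - \<tau>)) powr r \<le> exp (- r * s) * V (s - \<tau>) powr r" by simp
        qed
        also have "\<dots> = exp (- r * \<tau>) * E (t0 - \<tau>)" by (rule integral_unique, rule F4) (use tt in simp)
        finally show ?thesis .
      qed
      also have "c1 powr r * (1 - exp (- r * \<tau>)) / r + exp (- r * \<tau>) * E (t0 - \<tau>) < Bd t0"
        unfolding Bd_def using Emono[of "t0 - \<tau>" t0] tau by simp
      finally show ?thesis by simp
    qed
    define X where "X = c1"
    define Y where "Y = K * \<omega> * exp t0 * a * E t0 powr (1 / r)"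
    define Z where "Z = K * \<omega> * exp t0 * b * Bd t0 powr (1 / r)"
    have Bd0: "Bd t0 > 0" using J0 J2lt by simp
    have XYZ: "X > 0" "Y > 0" "Z > 0" unfolding X_def Y_def Z_def using c K0 \<omega>0 a0 b0 Et0 Bd0 by auto
    have "norm (y t0) \<le> c1 + K * (a * Ia + b * Ib)" using F2[OF t0T] unfolding split .
    also have "\<dots> \<le> c1 + K * (a * (exp t0 * \<omega> * E t0 powr (1 / r)) + b * (exp t0 * \<omega> * J2 powr (1 / r)))"
      using IaV IaB IbB K0 a0 b0 by (intro add_left_mono mult_left_mono add_mono) auto
    also have "\<dots> < c1 + K * (a * (exp t0 * \<omega> * E t0 powr (1 / r)) + b * (exp t0 * \<omega> * Bd t0 powr (1 / r)))"
    proof -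
      have "J2 powr (1 / r) < Bd t0 powr (1 / r)" using powr_less_mono2[OF _ J0 J2lt, of "1/r"] r1 by simp
      then show ?thesis using K0 b0 \<omega>0 by (intro add_strict_left_mono mult_strict_left_mono) auto
    qed
    also have "\<dots> = X + Y + Z" unfolding X_def Y_def Z_def by (simp add: algebra_simps)
    also have "X + Y + Z \<le> V t0"
    proof (rule ccontr)
      assume "\<not> X + Y + Z \<le> V t0"
      then have "V t0 powr r < (X + Y + Z) powr r" using V0'[of t0] r1 by (intro powr_less_mono2) auto
      also have "\<dots> \<le> 3 powr (r - 1) * (X powr r + Y powr r + Z powr r)"
        by (rule power_mean3) (use XYZ r1 in auto)
      also have "3 powr (r - 1) = c3" unfolding c3_def r_def by simp
      also have "Y powr r = (K * \<omega> * exp t0 * a) powr r * E t0"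
        unfolding Y_def using Et0 r1 K0 \<omega>0 a0 by (simp add: powr_mult powr_powr)
      also have "Z powr r = (K * \<omega> * exp t0 * b) powr r * Bd t0"
        unfolding Z_def using Bd0 r1 K0 \<omega>0 b0 by (simp add: powr_mult powr_powr)
      also have "c3 * (X powr r + (K * \<omega> * exp t0 * a) powr r * E t0 + (K * \<omega> * exp t0 * b) powr r * Bd t0) = V t0 powr r"
        unfolding X_def by (rule keyid)
      finally show False by simp
    qed
    finally show False using yt0 by simp
  qed
qed

end
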